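(* Consider the Lohe hermitian sphere model $$\dot z_j=\Omega_jz_j+\kappa_0\big(z_c\langle z_j,z_j\rangle-z_j\langle z_c,z_j\rangle\big)+\kappa_1\big(\langle z_j,z_c\rangle-\langle z_c,z_j\rangle\big)z_j,\qquad j=1,\dots,N.$$ Assume the following hold: - $\Omega_j=\Omega$ for all $j$, for a skew-hermitian $d\times d$ matrix $\Omega$; - $0<\kappa_1<\frac14\kappa_0$; - $|z_j^0|=1$ for all $j$; - $\rho^0>\frac{N-2}{N}$. Let $\{z_j\}$ be the global solution with $z_j(0)=z_j^0$. Then for all $i,j$, $\langle z_i(t),z_j(t)\rangle\to1$ exponentially fast as $t\to\infty$. In particular $\max_{i,j}|z_i(t)-z_j(t)|\to0$ exponentially fast.
   Context: Notation: - $\langle z,w\rangle=\sum_\alpha\overline{z_\alpha}w_\alpha$ on $\mathbb C^d$, and $|z|=\langle z,z\rangle^{1/2}$; - $z_c:=\frac1N\sum_kz_k$; - the $\Omega_j$ are skew-hermitian matrices; - $\kappa_0,\kappa_1$ are real coupling constants; - $\rho^0:=\big|\frac1N\sum_{j=1}^Nz_j^0\big|$. *)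

theory Defs
  imports "HOL-Analysis.Analysis"
begin

definition hinner :: "complex^'d \<Rightarrow> complex^'d \<Rightarrow> complex" where
  "hinner z w = (\<Sum>\<alpha>\<in>UNIV. cnj (z $ \<alpha>) * w $ \<alpha>)"

text \<open>Centroid z_c = (1/N) sum_{k<N} z_k (particles indexed by 0..N-1).\<close>
definition centroid :: "nat \<Rightarrow> (nat \<Rightarrow> complex^'d) \<Rightarrow> complex^'d" where
  "centroid N z = (1 / real N) *\<^sub>R (\<Sum>k<N. z k)"

definition skew_hermitian :: "complex^'d^'d \<Rightarrow> bool" where
  "skew_hermitian A \<longleftrightarrow> (\<forall>i j. A $ i $ j = - cnj (A $ j $ i))"

definition lohe_rhs :: "complex^'d^'d \<Rightarrow> real \<Rightarrow> real \<Rightarrow> nat \<Rightarrow> (nat \<Rightarrow> complex^'d) \<Rightarrow> nat \<Rightarrow> complex^'d" where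
  "lohe_rhs \<Omega> \<kappa>0 \<kappa>1 N z j =
     (let zc = centroid N z in
      \<Omega> *v z j
      + of_real \<kappa>0 *s (hinner (z j) (z j) *s zc - hinner zc (z j) *s z j)
      + (of_real \<kappa>1 * (hinner (z j) zc - hinner zc (z j))) *s z j)"

end

theory Submission
  imports Defs
begin




lemma mono_deriv:
  fixes f f' :: "real \<Rightarrow> real"
  assumes d: "\<And>t. t \<ge> 0 \<Longrightarrow> (f has_real_derivative f' t) (at t within {0..})"
    and p: "\<And>t. t \<ge> 0 \<Longrightarrow> f' t \<ge> 0" and s: "0 \<le> s" "s \<le> t"
  shows "f s \<le> f t"
proof (rule DERIV_nonneg_imp_increasing_open[OF \<open>s\<le>t\<close>])
  fix x assume x: "s < x" "x < t"
  then have "x \<in> interior {0..}" using s by auto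
  then have "at x within {0..} = at x" by (rule at_within_interior)
  then show "\<exists>y. (f has_real_derivative y) (at x) \<and> 0 \<le> y"
    using d[of x] p[of x] x s by auto
next
  have "continuous_on {0..} f"
    unfolding continuous_on_eq_continuous_within
    using d DERIV_continuous by blast
  then show "continuous_on {s..t} f"
    by (rule continuous_on_subset) (use s in auto)
qed

lemma deriv_inner_self:
  assumes "(g has_vector_derivative g') (at t within S)"
  shows "((\<lambda>s. g s \<bullet> g s) has_real_derivative 2 * (g t \<bullet> g')) (at t within S)"
proof -
  have "(g has_derivative (\<lambda>h. h *\<^sub>R g')) (at t within S)"
    using assms by (simp add: has_vector_derivative_def)
  from has_derivative_inner[OF this this]
  show ?thesis unfolding has_field_derivative_def
    by (rule has_derivative_eq_rhs) (auto simp: inner_commute algebra_simps)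
qed


lemma hinner_Re: "Re (hinner z w) = z \<bullet> w"
  unfolding hinner_def inner_vec_def by (simp add: Re_sum inner_complex_def)

lemma hinner_self: "hinner z z = complex_of_real (z \<bullet> z)"
proof (rule complex_eqI)
  show "Re (hinner z z) = Re (complex_of_real (z \<bullet> z))" by (simp add: hinner_Re)
  show "Im (hinner z z) = Im (complex_of_real (z \<bullet> z))"
    unfolding hinner_def by (simp add: Im_sum algebra_simps)
qed

lemma hinner_add_right: "hinner z (a + b) = hinner z a + hinner z b"
  unfolding hinner_def by (simp add: algebra_simps sum.distrib)
lemma hinner_diff_right: "hinner z (a - b) = hinner z a - hinner z b"
  unfolding hinner_def by (simp add: algebra_simps sum_subtractf)
lemma hinner_smult_right: "hinner z (c *s b) = c * hinner z b"
  unfolding hinner_def by (simp add: algebra_simps sum_distrib_left)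
lemma hinner_scaleR_right: "hinner z (r *\<^sub>R b) = of_real r * hinner z b"
  unfolding hinner_def by (simp only: vector_scaleR_component) (simp add: scaleR_conv_of_real sum_distrib_left algebra_simps)
lemma hinner_sum_right: "hinner z (sum f A) = (\<Sum>a\<in>A. hinner z (f a))"
  unfolding hinner_def by (induct A rule: infinite_finite_induct) (auto simp: algebra_simps sum.distrib)
lemma hinner_cnj: "cnj (hinner z w) = hinner w z"
  unfolding hinner_def by (simp add: mult.commute)

lemma hinner_skew:
  assumes "skew_hermitian \<Omega>"
  shows "Re (hinner z (\<Omega> *v z)) = 0"
proof -
  have "cnj (hinner z (\<Omega> *v z)) = - hinner z (\<Omega> *v z)"
  proof -
    have "cnj (hinner z (\<Omega> *v z)) = (\<Sum>a\<in>UNIV. \<Sum>b\<in>UNIV. z$a * cnj (\<Omega>$a$b) * cnj (z$b))"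
      unfolding hinner_def matrix_vector_mult_def by (simp add: sum_distrib_left algebra_simps)
    also have "\<dots> = (\<Sum>a\<in>UNIV. \<Sum>b\<in>UNIV. - (cnj (z$b) * \<Omega>$b$a * z$a))"
      using assms unfolding skew_hermitian_def by (intro sum.cong refl) (metis (no_types) complex_cnj_cnj complex_cnj_minus mult.commute mult.left_commute mult_minus_left mult_minus_right)
    also have "\<dots> = - (\<Sum>b\<in>UNIV. \<Sum>a\<in>UNIV. cnj (z$b) * \<Omega>$b$a * z$a)"
      by (subst sum.swap) (simp add: sum_negf)
    also have "\<dots> = - hinner z (\<Omega> *v z)"
      unfolding hinner_def matrix_vector_mult_def by (simp add: sum_distrib_left algebra_simps)
    finally show ?thesis .
  qed
  then have "Re (cnj (hinner z (\<Omega> *v z))) = Re (- hinner z (\<Omega> *v z))" by simp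
  then show ?thesis by simp
qed

lemma hinner_le: "cmod (hinner z w) \<le> norm z * norm w"
proof -
  have "cmod (hinner z w) \<le> (\<Sum>a\<in>UNIV. cmod (cnj (z$a) * w$a))"
    unfolding hinner_def by (rule norm_sum)
  also have "\<dots> = (\<Sum>a\<in>UNIV. \<bar>norm (z$a)\<bar> * \<bar>norm (w$a)\<bar>)"
    by (simp add: norm_mult)
  also have "\<dots> \<le> L2_set (\<lambda>a. norm (z$a)) UNIV * L2_set (\<lambda>a. norm (w$a)) UNIV"
    by (rule L2_set_mult_ineq)
  finally show ?thesis by (simp add: norm_vec_def)
qed




lemma rhs_norm:
  assumes "skew_hermitian \<Omega>"
  shows "Re (hinner (Z j) (lohe_rhs \<Omega> \<kappa>0 \<kappa>1 N Z j)) = 0"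
proof -
  define g where "g = hinner (Z j) (centroid N Z)"
  have h: "hinner (centroid N Z) (Z j) = cnj g" unfolding g_def by (simp add: hinner_cnj)
  have "Re (hinner (Z j) (lohe_rhs \<Omega> \<kappa>0 \<kappa>1 N Z j)) =
    Re (hinner (Z j) (\<Omega> *v Z j)) + Re (of_real \<kappa>0 * (of_real (Z j \<bullet> Z j) * g - cnj g * of_real (Z j \<bullet> Z j)))
     + Re (of_real \<kappa>1 * (g - cnj g) * of_real (Z j \<bullet> Z j))"
    unfolding lohe_rhs_def Let_def
    by (simp only: hinner_add_right hinner_diff_right hinner_smult_right h g_def[symmetric] hinner_self plus_complex.sel)
  also have "\<dots> = 0" using hinner_skew[OF assms] by simp
  finally show ?thesis .
qed


lemma mv_scaleR: "(A::complex^'n^'m) *v (r *\<^sub>R x) = r *\<^sub>R (A *v x)"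
  unfolding vec_eq_iff matrix_vector_mult_def
  by (simp only: vector_scaleR_component vec_lambda_beta) (simp add: scaleR_conv_of_real sum_distrib_left algebra_simps)

lemma rhs_centroid:
  assumes skew: "skew_hermitian \<Omega>" and N: "N > 0" and unit: "\<forall>j<N. norm (Z j) = 1"
    and k0: "\<kappa>0 \<ge> 0" and k1: "\<kappa>1 \<ge> 0"
  defines "c \<equiv> centroid N Z"
  defines "\<rho> \<equiv> norm c"
  shows "(\<Sum>j<N. Re (hinner c (lohe_rhs \<Omega> \<kappa>0 \<kappa>1 N Z j))) \<ge> \<kappa>0 * N * \<rho>^2 * (N*\<rho> - N + 2) * (1-\<rho>)"
    and "(\<Sum>j<N. Re (hinner c (lohe_rhs \<Omega> \<kappa>0 \<kappa>1 N Z j))) \<ge> 0"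
    and "\<rho> \<le> 1"
proof -
  define a where "a j = Re (hinner c (Z j))" for j
  define b where "b j = Im (hinner c (Z j))" for j
  have sumZ: "(\<Sum>j<N. Z j) = real N *\<^sub>R c"
    using N unfolding c_def centroid_def by simp
  have cc: "hinner c c = of_real (\<rho>^2)"
    unfolding \<rho>_def by (simp add: hinner_self power2_norm_eq_inner)
  have per: "Re (hinner c (lohe_rhs \<Omega> \<kappa>0 \<kappa>1 N Z j)) =
      Re (hinner c (\<Omega> *v Z j)) + \<kappa>0 * (\<rho>^2 - (a j)^2 + (b j)^2) + 2 * \<kappa>1 * (b j)^2"
    if j: "j < N" for j
  proof -
    define h where "h = hinner c (Z j)"
    have g: "hinner (Z j) c = cnj h" unfolding h_def by (simp add: hinner_cnj)
    have zz: "hinner (Z j) (Z j) = 1"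
      using unit j by (simp add: hinner_self power2_norm_eq_inner[symmetric])
    have "Re (hinner c (lohe_rhs \<Omega> \<kappa>0 \<kappa>1 N Z j)) =
      Re (hinner c (\<Omega> *v Z j)) + Re (of_real \<kappa>0 * (1 * of_real (\<rho>^2) - h * h))
       + Re (of_real \<kappa>1 * (cnj h - h) * h)"
      unfolding lohe_rhs_def Let_def c_def[symmetric]
      by (simp only: hinner_add_right hinner_diff_right hinner_smult_right h_def[symmetric] g zz cc plus_complex.sel)
    also have "\<dots> = Re (hinner c (\<Omega> *v Z j)) + \<kappa>0 * (\<rho>^2 - (Re h)^2 + (Im h)^2) + 2 * \<kappa>1 * (Im h)^2"
      by (simp add: power2_eq_square algebra_simps)
    finally show ?thesis unfolding a_def b_def h_def .
  qed
  have om: "(\<Sum>j<N. Re (hinner c (\<Omega> *v Z j))) = 0"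
  proof -
    have re_of: "Re (complex_of_real r * w) = r * Re w" for r w by simp
    have eq: "(\<Sum>j<N. hinner c (\<Omega> *v Z j)) = of_real (real N) * hinner c (\<Omega> *v c)"
      unfolding hinner_sum_right[symmetric] vec.sum[symmetric] sumZ
      by (simp only: mv_scaleR hinner_scaleR_right)
    have "Re (\<Sum>j<N. hinner c (\<Omega> *v Z j)) = Re (of_real (real N) * hinner c (\<Omega> *v c))"
      by (simp only: eq)
    then have "(\<Sum>j<N. Re (hinner c (\<Omega> *v Z j))) = real N * Re (hinner c (\<Omega> *v c))"
      using re_of by (simp only: Re_sum re_of)
    then show ?thesis using hinner_skew[OF skew] by simp
  qed
  have aabs: "\<bar>a j\<bar> \<le> \<rho>" if "j < N" for j
    using Cauchy_Schwarz_ineq2[of c "Z j"] unit that unfolding a_def \<rho>_def by (simp add: hinner_Re)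
  have asum: "(\<Sum>j<N. a j) = real N * \<rho>^2"
  proof -
    have "(\<Sum>j<N. a j) = c \<bullet> (\<Sum>j<N. Z j)" unfolding a_def by (simp add: hinner_Re inner_sum_right)
    also have "\<dots> = real N * \<rho>^2" by (simp add: sumZ \<rho>_def power2_norm_eq_inner)
    finally show ?thesis .
  qed
  have rpos: "\<rho> \<ge> 0" unfolding \<rho>_def by simp
  have "real N * \<rho>^2 \<le> real N * \<rho>"
  proof -
    have "(\<Sum>j<N. a j) \<le> (\<Sum>j<N. \<rho>)" by (rule sum_mono) (use aabs in force)
    then show ?thesis using asum by simp
  qed
  then have "\<rho>^2 \<le> \<rho>" using N by simp
  then show r1: "\<rho> \<le> 1" using rpos by (cases "\<rho> = 0") (auto simp: power2_eq_square)
  have alow: "a j \<ge> real N * \<rho>^2 - (real N - 1) * \<rho>" if j: "j < N" for j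
  proof -
    have "(\<Sum>j<N. a j) = a j + (\<Sum>k\<in>{..<N}-{j}. a k)"
      using j by (simp add: sum.remove)
    also have "(\<Sum>k\<in>{..<N}-{j}. a k) \<le> (\<Sum>k\<in>{..<N}-{j}. \<rho>)"
      by (rule sum_mono) (use aabs in force)
    also have "\<dots> = (real N - 1) * \<rho>" using j by (simp add: of_nat_diff)
    finally show ?thesis using asum by simp
  qed
  have term_lb: "\<rho>^2 - (a j)^2 \<ge> (\<rho> - a j) * (\<rho> * (real N * \<rho> - real N + 2))" if j: "j < N" for j
  proof -
    have "\<rho> + a j \<ge> \<rho> * (real N * \<rho> - real N + 2)" using alow[OF j] by (simp add: algebra_simps power2_eq_square)
    moreover have "\<rho> - a j \<ge> 0" using aabs[OF j] by simp
    ultimately have "(\<rho> - a j) * (\<rho> + a j) \<ge> (\<rho> - a j) * (\<rho> * (real N * \<rho> - real N + 2))"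
      by (simp add: mult_left_mono)
    then show ?thesis by (simp add: power2_eq_square algebra_simps)
  qed
  have tnn: "\<rho>^2 - (a j)^2 \<ge> 0" if j: "j < N" for j
    using aabs[OF j] rpos by (metis abs_le_square_iff abs_of_nonneg diff_ge_0_iff_ge)
  have S: "(\<Sum>j<N. Re (hinner c (lohe_rhs \<Omega> \<kappa>0 \<kappa>1 N Z j))) =
     (\<Sum>j<N. \<kappa>0 * (\<rho>^2 - (a j)^2 + (b j)^2) + 2 * \<kappa>1 * (b j)^2)"
    using om by (simp add: per sum.distrib)
  have S2: "(\<Sum>j<N. \<kappa>0 * (\<rho>^2 - (a j)^2 + (b j)^2) + 2 * \<kappa>1 * (b j)^2) \<ge> (\<Sum>j<N. \<kappa>0 * (\<rho>^2 - (a j)^2))"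
    by (rule sum_mono) (use k0 k1 in \<open>simp add: algebra_simps\<close>)
  show "(\<Sum>j<N. Re (hinner c (lohe_rhs \<Omega> \<kappa>0 \<kappa>1 N Z j))) \<ge> 0"
    unfolding S using S2 sum_nonneg[of "{..<N}" "\<lambda>j. \<kappa>0 * (\<rho>^2 - (a j)^2)"] tnn k0 by force
  have "(\<Sum>j<N. \<kappa>0 * (\<rho>^2 - (a j)^2)) \<ge> (\<Sum>j<N. \<kappa>0 * ((\<rho> - a j) * (\<rho> * (real N * \<rho> - real N + 2))))"
    by (rule sum_mono) (use term_lb k0 in \<open>simp add: mult_left_mono\<close>)
  also have "(\<Sum>j<N. \<kappa>0 * ((\<rho> - a j) * (\<rho> * (real N * \<rho> - real N + 2))))
     = \<kappa>0 * (\<rho> * (real N * \<rho> - real N + 2)) * (\<Sum>j<N. \<rho> - a j)"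
    by (simp only: sum_distrib_left) (rule sum.cong, simp_all add: mult_ac)
  also have "(\<Sum>j<N. \<rho> - a j) = real N * \<rho> - real N * \<rho>^2"
    by (simp add: sum_subtractf asum)
  finally have "(\<Sum>j<N. \<kappa>0 * (\<rho>^2 - (a j)^2)) \<ge> \<kappa>0 * real N * \<rho>^2 * (real N * \<rho> - real N + 2) * (1 - \<rho>)"
    by (simp add: power2_eq_square algebra_simps)
  then show "(\<Sum>j<N. Re (hinner c (lohe_rhs \<Omega> \<kappa>0 \<kappa>1 N Z j))) \<ge> \<kappa>0 * N * \<rho>^2 * (N*\<rho> - N + 2) * (1-\<rho>)"
    unfolding S using S2 by linarith
qed


theorem theorem3p4:
  fixes N :: nat and \<Omega> :: "complex^'d^'d" and \<kappa>0 \<kappa>1 :: real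
    and z :: "real \<Rightarrow> nat \<Rightarrow> complex^'d"
  assumes skew: "skew_hermitian \<Omega>"
    and k1pos: "0 < \<kappa>1" and k1k0: "\<kappa>1 < \<kappa>0 / 4"
    and unit0: "\<forall>j<N. norm (z 0 j) = 1"
    and rho0: "norm (centroid N (z 0)) > (real N - 2) / real N"
    and sol: "\<forall>j<N. \<forall>t\<ge>0.
      ((\<lambda>s. z s j) has_vector_derivative lohe_rhs \<Omega> \<kappa>0 \<kappa>1 N (z t) j) (at t within {0..})"
  shows "\<exists>C r. C > 0 \<and> r > 0 \<and>
           (\<forall>t\<ge>0. \<forall>i<N. \<forall>j<N. cmod (1 - hinner (z t i) (z t j)) \<le> C * exp (- r * t))
         \<and> (\<exists>D \<mu>. D > 0 \<and> \<mu> > 0 \<and>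
              (\<forall>t\<ge>0. \<forall>i<N. \<forall>j<N. norm (z t i - z t j) \<le> D * exp (- \<mu> * t)))"
proof -
  define F where "F t j = lohe_rhs \<Omega> \<kappa>0 \<kappa>1 N (z t) j" for t j
  define cz where "cz t = centroid N (z t)" for t
  define P where "P t = cz t \<bullet> cz t" for t
  have k0: "\<kappa>0 > 0" using k1pos k1k0 by simp
  have Npos: "N > 0"
  proof (rule ccontr)
    assume "\<not> N > 0" then have "N = 0" by simp
    then show False using rho0 by (simp add: centroid_def)
  qed
  have unit: "norm (z t j) = 1" if t: "t \<ge> 0" and j: "j < N" for t j
  proof -
    have d: "((\<lambda>s. z s j \<bullet> z s j) has_real_derivative 0) (at s within {0..})" if "s \<ge> 0" for s
    proof -
      have "((\<lambda>s. z s j \<bullet> z s j) has_real_derivative 2 * (z s j \<bullet> F s j)) (at s within {0..})"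
        using deriv_inner_self sol j that unfolding F_def by blast
      moreover have "z s j \<bullet> F s j = 0"
        using rhs_norm[OF skew] unfolding F_def hinner_Re[symmetric] by blast
      ultimately show ?thesis by simp
    qed
    have "z 0 j \<bullet> z 0 j \<le> z t j \<bullet> z t j"
      by (rule mono_deriv[where f'="\<lambda>_. 0"]) (use d t in auto)
    moreover have "- (z 0 j \<bullet> z 0 j) \<le> - (z t j \<bullet> z t j)"
      by (rule mono_deriv[where f="\<lambda>s. - (z s j \<bullet> z s j)" and f'="\<lambda>_. 0"])
         (use d t in \<open>auto intro: DERIV_minus[where D=0, simplified]\<close>)
    ultimately have "z t j \<bullet> z t j = z 0 j \<bullet> z 0 j" by linarith
    then show ?thesis using unit0 j by (simp add: norm_eq_1)
  qed
  define S where "S t = (\<Sum>j<N. Re (hinner (cz t) (F t j)))" for t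
  have Pd: "(P has_real_derivative 2 / real N * S t) (at t within {0..})" if t: "t \<ge> 0" for t
  proof -
    have "((\<lambda>s. \<Sum>j<N. z s j) has_vector_derivative (\<Sum>j<N. F t j)) (at t within {0..})"
      by (rule has_vector_derivative_sum) (use sol t in \<open>auto simp: F_def\<close>)
    from has_vector_derivative_scaleR[OF DERIV_const[of "1 / real N"] this]
    have "(cz has_vector_derivative (1 / real N) *\<^sub>R (\<Sum>j<N. F t j)) (at t within {0..})"
      unfolding cz_def centroid_def by simp
    from deriv_inner_self[OF this]
    have "(P has_real_derivative 2 * (cz t \<bullet> ((1 / real N) *\<^sub>R (\<Sum>j<N. F t j)))) (at t within {0..})"
      unfolding P_def[abs_def] .
    moreover have "2 * (cz t \<bullet> ((1 / real N) *\<^sub>R (\<Sum>j<N. F t j))) = 2 / real N * S t"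
      unfolding S_def by (simp add: inner_sum_right hinner_Re)
    ultimately show ?thesis by metis
  qed
  define \<rho>0 where "\<rho>0 = norm (cz 0)"
  have Snn: "S t \<ge> 0" if "t \<ge> 0" for t
    using rhs_centroid(2)[OF skew Npos _ less_imp_le[OF k0] less_imp_le[OF k1pos], of "z t"] unit that
    unfolding S_def F_def cz_def by blast
  have Pmono: "P 0 \<le> P t" if "t \<ge> 0" for t
    by (rule mono_deriv[where f'="\<lambda>t. 2 / real N * S t", OF Pd]) (use Snn that in auto)
  have Pn: "P t = (norm (cz t))^2" for t unfolding P_def by (simp add: power2_norm_eq_inner)
  have rho_ge: "norm (cz t) \<ge> \<rho>0" if "t \<ge> 0" for t
    using Pmono[OF that] unfolding Pn \<rho>0_def by (simp add: power_mono_iff power2_le_iff_abs_le)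
  have r0pos: "\<rho>0 > 0"
  proof (cases "N = 1")
    case True
    then have "cz 0 = z 0 0" unfolding cz_def centroid_def by simp
    then show ?thesis using unit0 True unfolding \<rho>0_def by simp
  next
    case False
    then have "N \<ge> 2" using Npos by simp
    then have "(real N - 2) / real N \<ge> 0" by simp
    then show ?thesis using rho0 unfolding \<rho>0_def cz_def by linarith
  qed
  define \<delta>0 where "\<delta>0 = real N * \<rho>0 - real N + 2"
  have d0pos: "\<delta>0 > 0"
  proof -
    have "\<rho>0 * real N > real N - 2" using rho0 Npos unfolding \<rho>0_def cz_def
      by (simp add: pos_divide_less_eq)
    then show ?thesis unfolding \<delta>0_def by (simp add: algebra_simps)
  qed
  define c where "c = \<kappa>0 * \<rho>0^2 * \<delta>0"
  have cpos: "c > 0" unfolding c_def using k0 r0pos d0pos by simp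
  have Dlow: "2 / real N * S t \<ge> c * (1 - P t)" if t: "t \<ge> 0" for t
  proof -
    define \<rho> where "\<rho> = norm (cz t)"
    have unitt: "\<forall>j<N. norm (z t j) = 1" using unit t by blast
    have A: "S t \<ge> \<kappa>0 * N * \<rho>^2 * (N*\<rho> - N + 2) * (1-\<rho>)"
      using rhs_centroid(1)[OF skew Npos unitt less_imp_le[OF k0] less_imp_le[OF k1pos]]
      unfolding S_def F_def \<rho>_def cz_def by blast
    have r1: "\<rho> \<le> 1"
      using rhs_centroid(3)[OF skew Npos unitt less_imp_le[OF k0] less_imp_le[OF k1pos]]
      unfolding \<rho>_def cz_def by blast
    have rge: "\<rho> \<ge> \<rho>0" using rho_ge[OF t] unfolding \<rho>_def .
    have dge: "N*\<rho> - N + 2 \<ge> \<delta>0" unfolding \<delta>0_def using rge by (simp add: mult_left_mono)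
    have sq: "\<rho>^2 \<ge> \<rho>0^2" using rge r0pos by (simp add: power_mono)
    have "\<rho>0^2 * \<delta>0 \<le> \<rho>^2 * (N*\<rho> - N + 2)"
      by (rule mult_mono[OF sq dge]) (use d0pos in auto)
    then have "\<kappa>0 * (\<rho>0^2 * \<delta>0) * (1 - \<rho>) \<le> \<kappa>0 * (\<rho>^2 * (N*\<rho> - N + 2)) * (1 - \<rho>)"
      using r1 k0 by (intro mult_right_mono mult_left_mono) auto
    then have X: "\<kappa>0 * (\<rho>0^2 * \<delta>0) * (1 - \<rho>) \<le> \<kappa>0 * (\<rho>^2 * (N*\<rho> - N + 2)) * (1 - \<rho>)" .
    define Y where "Y = \<kappa>0 * (\<rho>^2 * (N*\<rho> - N + 2)) * (1 - \<rho>)"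
    have A': "S t \<ge> real N * Y" using A unfolding Y_def by (simp add: mult_ac)
    have "2 / real N * S t \<ge> 2 / real N * (real N * Y)" using A' Npos by (intro mult_left_mono) auto
    then have "2 / real N * S t \<ge> 2 * Y" using Npos by simp
    then have B: "2 / real N * S t \<ge> 2 * c * (1 - \<rho>)"
      using X unfolding c_def Y_def by (simp add: mult_ac)
    have "1 - P t = (1 - \<rho>) * (1 + \<rho>)" unfolding Pn \<rho>_def by (simp add: power2_eq_square algebra_simps)
    also have "\<dots> \<le> (1 - \<rho>) * 2" using r1 by (intro mult_left_mono) auto
    finally have "c * (1 - P t) \<le> c * ((1 - \<rho>) * 2)" using cpos by (simp add: mult_left_mono)
    then show ?thesis using B by (simp add: mult_ac)
  qed
  have Vdecay: "1 - P t \<le> exp (- c * t)" if t: "t \<ge> 0" for t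
  proof -
    have dW: "((\<lambda>s. - ((1 - P s) * exp (c * s))) has_real_derivative
        (2 / real N * S s - c * (1 - P s)) * exp (c * s)) (at s within {0..})" if "s \<ge> 0" for s
      using Pd[OF that] by (auto intro!: derivative_eq_intros simp: algebra_simps)
    have "- ((1 - P 0) * exp (c * 0)) \<le> - ((1 - P t) * exp (c * t))"
      by (rule mono_deriv[OF dW]) (use Dlow t in auto)
    moreover have "P 0 \<ge> 0" unfolding P_def by simp
    ultimately have "(1 - P t) * exp (c * t) \<le> 1" by simp
    then have "(1 - P t) * exp (c * t) * exp (- c * t) \<le> exp (- c * t)" by simp
    then show ?thesis by (simp add: mult.assoc exp_add[symmetric])
  qed
  have sumZ: "(\<Sum>k<N. z t k) = real N *\<^sub>R cz t" for t
    using Npos unfolding cz_def centroid_def by simp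
  have dist_c: "norm (z t i - cz t) \<le> sqrt (real N) * exp (- (c/2) * t)" if t: "t \<ge> 0" and i: "i < N" for t i
  proof -
    have "(\<Sum>k<N. (norm (z t k - cz t))^2) = (\<Sum>k<N. 1 - 2 * (z t k \<bullet> cz t) + P t)"
      by (rule sum.cong) (use unit t in \<open>auto simp: power2_norm_eq_inner inner_diff_left inner_diff_right P_def inner_commute norm_eq_1\<close>)
    also have "\<dots> = real N - 2 * ((\<Sum>k<N. z t k) \<bullet> cz t) + real N * P t"
      by (simp add: sum.distrib sum_subtractf inner_sum_left sum_distrib_left)
    also have "\<dots> = real N * (1 - P t)" unfolding sumZ P_def by (simp add: algebra_simps)
    finally have tot: "(\<Sum>k<N. (norm (z t k - cz t))^2) = real N * (1 - P t)" .
    have "(norm (z t i - cz t))^2 \<le> (\<Sum>k<N. (norm (z t k - cz t))^2)"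
      by (rule member_le_sum) (use i in auto)
    also have "\<dots> \<le> real N * exp (- c * t)" unfolding tot using Vdecay[OF t] by (simp add: mult_left_mono)
    also have "\<dots> = (sqrt (real N) * exp (- (c/2) * t))^2"
    proof -
      have "exp (- (c/2) * t) * exp (- (c/2) * t) = exp (- c * t)"
        by (simp add: exp_add[symmetric])
      moreover have "sqrt (real N) * sqrt (real N) = real N" by simp
      moreover have "(sqrt (real N) * exp (- (c/2) * t))^2 = (sqrt (real N) * sqrt (real N)) * (exp (- (c/2) * t) * exp (- (c/2) * t))"
        unfolding power2_eq_square by (simp only: mult_ac)
      ultimately show ?thesis by simp
    qed
    finally show ?thesis by (rule power2_le_imp_le) simp
  qed
  have dist_ij: "norm (z t i - z t j) \<le> (2 * sqrt (real N) + 1) * exp (- (c/2) * t)"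
    if t: "t \<ge> 0" and i: "i < N" and j: "j < N" for t i j
  proof -
    have "norm (z t i - z t j) \<le> norm (z t i - cz t) + norm (z t j - cz t)"
    proof -
      have "z t i - z t j = (z t i - cz t) - (z t j - cz t)" by simp
      then show ?thesis using norm_triangle_ineq4[of "z t i - cz t" "z t j - cz t"] by simp
    qed
    also have "\<dots> \<le> 2 * (sqrt (real N) * exp (- (c/2) * t))"
      using dist_c[OF t i] dist_c[OF t j] by simp
    also have "\<dots> \<le> (2 * sqrt (real N) + 1) * exp (- (c/2) * t)" by (simp add: algebra_simps)
    finally show ?thesis .
  qed
  have hin: "cmod (1 - hinner (z t i) (z t j)) \<le> (2 * sqrt (real N) + 1) * exp (- (c/2) * t)"
    if t: "t \<ge> 0" and i: "i < N" and j: "j < N" for t i j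
  proof -
    have "hinner (z t i) (z t i) = 1"
      using unit[OF t i] by (simp add: hinner_self norm_eq_1)
    then have "1 - hinner (z t i) (z t j) = hinner (z t i) (z t i - z t j)"
      by (simp add: hinner_diff_right)
    then have "cmod (1 - hinner (z t i) (z t j)) \<le> norm (z t i) * norm (z t i - z t j)"
      using hinner_le by metis
    also have "\<dots> = norm (z t i - z t j)" using unit[OF t i] by simp
    finally show ?thesis using dist_ij[OF t i j] by linarith
  qed
  have Cpos: "2 * sqrt (real N) + 1 > 0" by (simp add: add_nonneg_pos)
  have "\<forall>t\<ge>0. \<forall>i<N. \<forall>j<N. cmod (1 - hinner (z t i) (z t j)) \<le> (2 * sqrt (real N) + 1) * exp (- (c/2) * t)"
    using hin by blast
  moreover have "\<forall>t\<ge>0. \<forall>i<N. \<forall>j<N. norm (z t i - z t j) \<le> (2 * sqrt (real N) + 1) * exp (- (c/2) * t)"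
    using dist_ij by blast
  ultimately show ?thesis using Cpos cpos
    by (intro exI[of _ "2 * sqrt (real N) + 1"] exI[of _ "c/2"] conjI) auto
qed

end
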